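(* Let $1\le d<n$ be integers and $X=P(d,n)$. Then there exists a family $\mathcal{F}_X$ of functions $\phi:V(X)\to\{-1,0,1\}$ such that: (i) for every $\phi\in\mathcal{F}_X$, both $-1$ and $1$ lie in the image of $\phi$; (ii) for every $\phi\in\mathcal{F}_X$ and every maximal clique $K$ of $X$, $\sum_{v\in V(K)}\phi(v)=0$; (iii) viewing each $\phi$ as a vector in $\mathbb{R}^{V(X)}$, $\mathcal{F}_X$ contains a linearly independent subset of cardinality $\binom{n-1}{d}$.
   Context: For integers $1\le d\le n$, let $S_{d,n}$ be the set of all $d$-tuples with entries in $[n]=\{1,\dots,n\}$ and pairwise distinct entries. The partial permutation graph $P(d,n)$ has vertex set $S_{d,n}$, two $d$-tuples being adjacent if and only if they differ in exactly one coordinate. *)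

theory Defs
  imports Complex_Main
begin

definition pp_vertices :: "nat \<Rightarrow> nat \<Rightarrow> nat list set" where
  "pp_vertices d n = {xs. length xs = d \<and> distinct xs \<and> set xs \<subseteq> {1..n}}"

definition pp_adj :: "nat \<Rightarrow> nat list \<Rightarrow> nat list \<Rightarrow> bool" where
  "pp_adj d xs ys \<longleftrightarrow> card {i. i < d \<and> xs ! i \<noteq> ys ! i} = 1"

definition pp_clique :: "nat \<Rightarrow> nat \<Rightarrow> nat list set \<Rightarrow> bool" where
  "pp_clique d n K \<longleftrightarrow> K \<subseteq> pp_vertices d n \<and>
     (\<forall>x\<in>K. \<forall>y\<in>K. x \<noteq> y \<longrightarrow> pp_adj d x y)"

definition pp_maximal_clique :: "nat \<Rightarrow> nat \<Rightarrow> nat list set \<Rightarrow> bool" where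
  "pp_maximal_clique d n K \<longleftrightarrow> pp_clique d n K \<and>
     (\<forall>K'. pp_clique d n K' \<and> K \<subseteq> K' \<longrightarrow> K' = K)"

definition lin_indep_on :: "'a set \<Rightarrow> ('a \<Rightarrow> real) set \<Rightarrow> bool" where
  "lin_indep_on V S \<longleftrightarrow>
     (\<forall>c. (\<forall>v\<in>V. (\<Sum>\<phi>\<in>S. c \<phi> * \<phi> v) = 0) \<longrightarrow> (\<forall>\<phi>\<in>S. c \<phi> = 0))"

end

theory Submission imports Defs "HOL-Combinatorics.Permutations" begin


definition perm_of :: "nat list \<Rightarrow> nat list \<Rightarrow> nat \<Rightarrow> nat" where
  "perm_of r L = (\<lambda>k. if k < length L then inv_into {..<length r} ((!) r) (L!k) else k)"

lemma perm_of_permutes: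
  assumes "distinct r" "distinct L" "set L = set r"
  shows "perm_of r L permutes {..<length L}"
proof -
  have len: "length r = length L" using assms by (metis distinct_card)
  have b1: "bij_betw ((!) L) {..<length L} (set L)" using assms by (intro bij_betw_nth) auto
  have b2: "bij_betw ((!) r) {..<length r} (set r)" using assms by (intro bij_betw_nth) auto
  have b3: "bij_betw (inv_into {..<length r} ((!) r)) (set r) {..<length r}"
    using b2 by (rule bij_betw_inv_into)
  have "bij_betw (inv_into {..<length r} ((!) r) \<circ> (!) L) {..<length L} {..<length L}"
    using bij_betw_trans[OF b1] b3 assms len by simp
  then have "bij_betw (perm_of r L) {..<length L} {..<length L}"
    by (rule bij_betw_cong[THEN iffD1, rotated]) (auto simp: perm_of_def)
  then show ?thesis by (rule bij_imp_permutes) (auto simp: perm_of_def)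
qed

lemma perm_of_swap:
  assumes "i < j" "j < length L"
  shows "perm_of r (L[i:=L!j, j:=L!i]) = perm_of r L \<circ> Transposition.transpose i j"
  using assms by (auto simp: perm_of_def transpose_def fun_eq_iff nth_list_update)

lemma sign_swap:
  assumes "distinct r" "distinct L" "set L = set r" "i < j" "j < length L"
  shows "sign (perm_of r (L[i:=L!j, j:=L!i])) = - sign (perm_of r L)"
proof -
  have "permutation (perm_of r L)"
    using perm_of_permutes[OF assms(1-3)] by (rule permutes_imp_permutation[rotated]) simp
  then show ?thesis using assms
    by (simp add: perm_of_swap sign_compose permutation_swap_id sign_swap_id)
qed

lemma sign_pm: "sign p = 1 \<or> sign p = -1"
  by (simp add: sign_def)


definition extT :: "nat set \<Rightarrow> nat list \<Rightarrow> nat list" where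
  "extT T y = y @ [the_elem (T - set y)]"

definition phi :: "nat \<Rightarrow> nat \<Rightarrow> nat set \<Rightarrow> nat list \<Rightarrow> real" where
  "phi d n T v = (if v \<in> pp_vertices d n \<and> set v \<subseteq> T
     then real_of_int (sign (perm_of (sorted_list_of_set T) (extT T v))) else 0)"

definition line :: "nat \<Rightarrow> nat \<Rightarrow> nat list \<Rightarrow> nat \<Rightarrow> nat list set" where
  "line d n x i = {y \<in> pp_vertices d n. \<forall>j<d. j \<noteq> i \<longrightarrow> y!j = x!j}"

lemma finite_V: "finite (pp_vertices d n)"
proof -
  have "pp_vertices d n \<subseteq> {xs. set xs \<subseteq> {1..n} \<and> length xs = d}"
    by (auto simp: pp_vertices_def)
  moreover have "finite {xs. set xs \<subseteq> {1..n} \<and> length xs = d}"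
    by (rule finite_lists_length_eq) simp
  ultimately show ?thesis by (rule finite_subset)
qed

lemma phi_swap:
  assumes T: "T \<subseteq> {1..n}" "card T = Suc d"
    and y: "y \<in> pp_vertices d n" "set y \<subseteq> T"
    and y': "y' \<in> pp_vertices d n" "set y' \<subseteq> T"
    and i: "i < d" and yy: "y' = y[i:=b]" and b: "b \<noteq> y!i"
  shows "phi d n T y' = - phi d n T y"
proof -
  have fin: "finite T" using T finite_subset by blast
  have ly: "length y = d" "distinct y" using y by (auto simp: pp_vertices_def)
  have ly': "length y' = d" "distinct y'" using y' by (auto simp: pp_vertices_def)
  define a where "a = y!i"
  have y'i: "y'!i = b" using yy ly i by simp
  have y'j: "\<And>j. j \<noteq> i \<Longrightarrow> y'!j = y!j" using yy by simp
  have bT: "b \<in> T" using y'i ly' i y'(2) by (metis nth_mem subsetD)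
  have aT: "a \<in> T" using ly i y(2) a_def by (metis nth_mem subsetD)
  have bny: "b \<notin> set y"
  proof
    assume "b \<in> set y"
    then obtain j where j: "j < d" "y!j = b" using ly by (auto simp: in_set_conv_nth)
    show False
    proof (cases "j = i")
      case True then show False using j b by simp
    next
      case False
      then have "y'!j = y'!i" using y'j y'i j by simp
      then show False using False ly' j i by (simp add: nth_eq_iff_index_eq)
    qed
  qed
  have any': "a \<notin> set y'"
  proof
    assume "a \<in> set y'"
    then obtain j where j: "j < d" "y'!j = a" using ly' by (auto simp: in_set_conv_nth)
    show False
    proof (cases "j = i")
      case True then show False using j b y'i a_def by simp
    next
      case False
      then have "y!j = y!i" using y'j j a_def by simp
      then show False using False ly j i by (simp add: nth_eq_iff_index_eq)
    qed
  qed
  have c1: "card (T - set y) = 1" using y(2) fin ly by (simp add: card_Diff_subset T distinct_card)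
  have c2: "card (T - set y') = 1" using y'(2) fin ly' by (simp add: card_Diff_subset T distinct_card)
  have e1: "T - set y = {b}" using c1 bT bny by (metis DiffI card_1_singletonE singletonD)
  have e2: "T - set y' = {a}" using c2 aT any' by (metis DiffI card_1_singletonE singletonD)
  define L where "L = y @ [b]"
  have Lext: "extT T y = L" using e1 by (simp add: extT_def L_def)
  have Lext': "extT T y' = L[i:=L!d, d:=L!i]"
    using e2 ly i yy by (simp add: extT_def L_def nth_append list_update_append a_def)
  have dL: "distinct L" using ly bny by (simp add: L_def)
  have sL: "set L = set (sorted_list_of_set T)" using e1 y(2) fin by (auto simp: L_def)
  have "sign (perm_of (sorted_list_of_set T) (L[i:=L!d, d:=L!i])) = - sign (perm_of (sorted_list_of_set T) L)"
    by (rule sign_swap) (use dL sL i ly in \<open>auto simp: L_def\<close>)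
  then show ?thesis using y y' by (simp add: phi_def Lext Lext')
qed

lemma phi_pm:
  assumes "v \<in> pp_vertices d n" "set v \<subseteq> T"
  shows "phi d n T v = 1 \<or> phi d n T v = -1"
  using assms sign_pm[of "perm_of (sorted_list_of_set T) (extT T v)"] by (auto simp: phi_def)

lemma line_sum:
  assumes T: "T \<subseteq> {1..n}" "card T = Suc d"
    and x: "x \<in> pp_vertices d n" and i: "i < d"
  shows "(\<Sum>y\<in>line d n x i. phi d n T y) = 0"
proof -
  have fin: "finite T" using T finite_subset by blast
  define A where "A = {y \<in> line d n x i. set y \<subseteq> T}"
  have finL: "finite (line d n x i)" using finite_V by (rule finite_subset[rotated]) (auto simp: line_def)
  have "(\<Sum>y\<in>line d n x i. phi d n T y) = (\<Sum>y\<in>A. phi d n T y)"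
    by (rule sum.mono_neutral_right) (use finL in \<open>auto simp: A_def phi_def\<close>)
  also have "\<dots> = 0"
  proof (cases "A = {}")
    case True then show ?thesis by simp
  next
    case False
    then obtain y where yA: "y \<in> A" by auto
    have yV: "y \<in> pp_vertices d n" and yT: "set y \<subseteq> T" and yl: "\<forall>j<d. j \<noteq> i \<longrightarrow> y!j = x!j"
      using yA by (auto simp: A_def line_def)
    have ly: "length y = d" "distinct y" "set y \<subseteq> {1..n}" using yV by (auto simp: pp_vertices_def)
    have c1: "card (T - set y) = 1" using yT fin ly by (simp add: card_Diff_subset T distinct_card)
    then obtain b where e1: "T - set y = {b}" by (metis card_1_singletonE)
    have bT: "b \<in> T" and bny: "b \<notin> set y" using e1 by auto
    define y' where "y' = y[i:=b]"
    have bi: "b \<noteq> y!i" using bny ly i by auto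
    have sy': "set y' \<subseteq> insert b (set y)" unfolding y'_def by (rule set_update_subset_insert)
    have s1: "set y' \<subseteq> {1..n}" using sy' bT T ly(3) by blast
    have s2: "distinct y'" using ly bny by (simp add: y'_def distinct_list_update)
    have y'V: "y' \<in> pp_vertices d n"
      using ly s1 s2 unfolding pp_vertices_def by (simp add: y'_def)
    have y'T: "set y' \<subseteq> T" using sy' bT yT by auto
    have y'A: "y' \<in> A" using y'V y'T yl by (auto simp: A_def line_def y'_def)
    have neq: "y \<noteq> y'" using bi ly i by (metis nth_list_update_eq y'_def)
    have "A \<subseteq> {y, y'}"
    proof
      fix z assume zA: "z \<in> A"
      have zV: "z \<in> pp_vertices d n" and zT: "set z \<subseteq> T" and zl: "\<forall>j<d. j \<noteq> i \<longrightarrow> z!j = x!j"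
        using zA by (auto simp: A_def line_def)
      have lz: "length z = d" "distinct z" using zV by (auto simp: pp_vertices_def)
      show "z \<in> {y, y'}"
      proof (cases "z!i = y!i")
        case True
        have "z = y"
        proof (rule nth_equalityI)
          show "length z = length y" using lz ly by simp
          fix k assume k: "k < length z"
          show "z!k = y!k"
          proof (cases "k = i")
            case True then show ?thesis using \<open>z!i = y!i\<close> by simp
          next
            case False then show ?thesis using zl yl lz k by simp
          qed
        qed
        then show ?thesis by simp
      next
        case False
        have "z!i \<notin> set y"
        proof
          assume "z!i \<in> set y"
          then obtain j where j: "j < d" "y!j = z!i" using ly by (auto simp: in_set_conv_nth)
          have "j \<noteq> i" using j False by auto
          then have "z!j = z!i" using j zl yl by simp
          then show False using \<open>j \<noteq> i\<close> lz j i by (simp add: nth_eq_iff_index_eq)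
        qed
        moreover have "z!i \<in> T" using zT lz i by (metis nth_mem subsetD)
        ultimately have "z!i = b" using e1 by auto
        then have zib: "z!i = b" .
        have "z = y'"
        proof (rule nth_equalityI)
          show "length z = length y'" using lz ly by (simp add: y'_def)
          fix k assume k: "k < length z"
          show "z!k = y'!k"
          proof (cases "k = i")
            case True then show ?thesis using zib ly i by (simp add: y'_def)
          next
            case False then show ?thesis using zl yl lz k by (simp add: y'_def)
          qed
        qed
        then show ?thesis by simp
      qed
    qed
    then have "A = {y, y'}" using yA y'A by auto
    then have "(\<Sum>y\<in>A. phi d n T y) = phi d n T y + phi d n T y'" using neq by simp
    also have "phi d n T y' = - phi d n T y"
      by (rule phi_swap[OF T yV yT y'V y'T i y'_def bi])
    finally show ?thesis by simp
  qed
  finally show ?thesis .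
qed

lemma line_clique: "pp_clique d n (line d n x i)"
  unfolding pp_clique_def
proof (intro conjI ballI impI)
  show "line d n x i \<subseteq> pp_vertices d n" by (auto simp: line_def)
next
  fix y z assume y: "y \<in> line d n x i" and z: "z \<in> line d n x i" and ne: "y \<noteq> z"
  have ly: "length y = d" "length z = d" using y z by (auto simp: line_def pp_vertices_def)
  have "\<forall>j<d. j \<noteq> i \<longrightarrow> y!j = z!j" using y z by (simp add: line_def)
  then have sub: "{j. j < d \<and> y!j \<noteq> z!j} \<subseteq> {i}" by auto
  have "{j. j < d \<and> y!j \<noteq> z!j} \<noteq> {}"
  proof
    assume "{j. j < d \<and> y!j \<noteq> z!j} = {}"
    then have "y = z" by (intro nth_equalityI) (use ly in auto)
    then show False using ne by simp
  qed
  then have "{j. j < d \<and> y!j \<noteq> z!j} = {i}" using sub by blast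
  then show "pp_adj d y z" by (simp add: pp_adj_def)
qed

lemma adj_single:
  assumes "pp_adj d x y"
  obtains i where "i < d" "{j. j < d \<and> x!j \<noteq> y!j} = {i}"
  using assms unfolding pp_adj_def by (metis (no_types, lifting) card_1_singletonE mem_Collect_eq singletonI)

lemma clique_in_line:
  assumes K: "pp_clique d n K" and d: "1 \<le> d" "d < n"
  shows "\<exists>x\<in>pp_vertices d n. \<exists>i<d. K \<subseteq> line d n x i"
proof (cases "\<exists>x y. x \<in> K \<and> y \<in> K \<and> x \<noteq> y")
  case True
  then obtain x y where xy: "x \<in> K" "y \<in> K" "x \<noteq> y" by auto
  have KV: "K \<subseteq> pp_vertices d n" using K by (simp add: pp_clique_def)
  have adj: "\<And>u v. u \<in> K \<Longrightarrow> v \<in> K \<Longrightarrow> u \<noteq> v \<Longrightarrow> pp_adj d u v" using K by (simp add: pp_clique_def)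
  obtain i where i: "i < d" "{j. j < d \<and> x!j \<noteq> y!j} = {i}" using adj[OF xy] by (rule adj_single)
  have "K \<subseteq> line d n x i"
  proof
    fix z assume z: "z \<in> K"
    have "\<forall>j<d. j \<noteq> i \<longrightarrow> z!j = x!j"
    proof (intro allI impI, rule ccontr)
      fix j assume j: "j < d" "j \<noteq> i" "z!j \<noteq> x!j"
      then have zx: "z \<noteq> x" by auto
      obtain k where k: "k < d" "{l. l < d \<and> z!l \<noteq> x!l} = {k}" using adj[OF z xy(1) zx] by (rule adj_single)
      have "j \<in> {l. l < d \<and> z!l \<noteq> x!l}" using j by simp
      then have kj: "k = j" using k(2) by simp
      have zi: "z!i = x!i"
      proof (rule ccontr)
        assume "z!i \<noteq> x!i"
        then have "i \<in> {l. l < d \<and> z!l \<noteq> x!l}" using i(1) by simp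
        then have "i = k" using k(2) by simp
        then show False using kj j by simp
      qed
      have "i \<in> {j. j < d \<and> x!j \<noteq> y!j}" using i(2) by simp
      then have xyi: "x!i \<noteq> y!i" by simp
      have xyj: "x!j = y!j"
      proof (rule ccontr)
        assume "x!j \<noteq> y!j"
        then have "j \<in> {l. l < d \<and> x!l \<noteq> y!l}" using j by simp
        then show False using i(2) j by simp
      qed
      have zy: "z \<noteq> y" using zi xyi by auto
      obtain m where m: "m < d" "{l. l < d \<and> z!l \<noteq> y!l} = {m}" using adj[OF z xy(2) zy] by (rule adj_single)
      have "i \<in> {l. l < d \<and> z!l \<noteq> y!l}" using zi xyi i by simp
      then have "i = m" using m(2) by simp
      moreover have "j \<in> {l. l < d \<and> z!l \<noteq> y!l}" using j xyj by simp
      then have "j = m" using m(2) by simp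
      ultimately show False using j by simp
    qed
    then show "z \<in> line d n x i" using z KV by (auto simp: line_def)
  qed
  then show ?thesis using xy KV i by blast
next
  case False
  define x0 where "x0 = [1..<Suc d]"
  have x0V: "x0 \<in> pp_vertices d n" using d by (auto simp: x0_def pp_vertices_def)
  show ?thesis
  proof (cases "K = {}")
    case True
    have "0 < d" using d by simp
    then show ?thesis using x0V True by blast
  next
    case F2: False
    then obtain x where x: "x \<in> K" by auto
    then have "K = {x}" using False by auto
    moreover have "x \<in> line d n x 0" using x K by (auto simp: line_def pp_clique_def)
    moreover have "x \<in> pp_vertices d n" using x K by (auto simp: pp_clique_def)
    moreover have "0 < d" using d by simp
    ultimately show ?thesis by blast
  qed
qed

lemma maxclique_sum:
  assumes T: "T \<subseteq> {1..n}" "card T = Suc d" and d: "1 \<le> d" "d < n"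
    and K: "pp_maximal_clique d n K"
  shows "(\<Sum>v\<in>K. phi d n T v) = 0"
proof -
  have "pp_clique d n K" using K by (simp add: pp_maximal_clique_def)
  then obtain x i where x: "x \<in> pp_vertices d n" "i < d" "K \<subseteq> line d n x i"
    using clique_in_line[OF _ d] by blast
  have "line d n x i = K" using K x(3) line_clique by (auto simp: pp_maximal_clique_def)
  then show ?thesis using line_sum[OF T x(1,2)] by simp
qed


theorem mainTheorem5:
  fixes d n :: nat
  assumes "1 \<le> d" and "d < n"
  shows "\<exists>F :: (nat list \<Rightarrow> real) set.
    (\<forall>\<phi>\<in>F. (\<forall>v\<in>pp_vertices d n. \<phi> v \<in> {-1, 0, 1}) \<and> (\<forall>v. v \<notin> pp_vertices d n \<longrightarrow> \<phi> v = 0)) \<and>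
    (\<forall>\<phi>\<in>F. (\<exists>v\<in>pp_vertices d n. \<phi> v = -1) \<and> (\<exists>v\<in>pp_vertices d n. \<phi> v = 1)) \<and>
    (\<forall>\<phi>\<in>F. \<forall>K. pp_maximal_clique d n K \<longrightarrow> (\<Sum>v\<in>K. \<phi> v) = 0) \<and>
    (\<exists>S\<subseteq>F. finite S \<and> card S = (n - 1) choose d \<and> lin_indep_on (pp_vertices d n) S)"
proof -
  note d = assms
  define TT where "TT = {T. T \<subseteq> {1..n} \<and> card T = Suc d \<and> n \<in> T}"
  define xT where "xT T = sorted_list_of_set (T - {n})" for T
  define F where "F = phi d n ` TT"
  have TTD: "T \<subseteq> {1..n}" "card T = Suc d" "n \<in> T" "finite T" if "T \<in> TT" for T
    using that finite_subset[of T "{1..n}"] by (auto simp: TT_def)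
  have xTV: "xT T \<in> pp_vertices d n" "set (xT T) \<subseteq> T" if "T \<in> TT" for T
  proof -
    note t = TTD[OF that]
    have "length (xT T) = d" using t by (simp add: xT_def)
    moreover have "set (xT T) = T - {n}" using t by (simp add: xT_def)
    ultimately show "xT T \<in> pp_vertices d n" "set (xT T) \<subseteq> T"
      using t by (auto simp: pp_vertices_def xT_def)
  qed
  have nz: "phi d n T (xT T) \<noteq> 0" if "T \<in> TT" for T
    using phi_pm[OF xTV[OF that]] by auto
  have diag: "T' = T" if "T \<in> TT" "T' \<in> TT" "phi d n T' (xT T) \<noteq> 0" for T T'
  proof -
    have "set (xT T) \<subseteq> T'" using that(3) by (auto simp: phi_def split: if_splits)
    moreover have "set (xT T) = T - {n}" using TTD[OF that(1)] by (simp add: xT_def)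
    ultimately have "T \<subseteq> T'" using TTD[OF that(2)] by auto
    then show ?thesis using TTD[OF that(1)] TTD[OF that(2)] by (metis card_subset_eq)
  qed
  have injF: "inj_on (phi d n) TT"
  proof (rule inj_onI)
    fix T T' assume a: "T \<in> TT" "T' \<in> TT" "phi d n T = phi d n T'"
    then have "phi d n T' (xT T) \<noteq> 0" using nz[OF a(1)] by metis
    then show "T = T'" using diag[OF a(1,2)] by simp
  qed
  have finTT: "finite TT"
    by (rule finite_subset[of _ "Pow {1..n}"]) (auto simp: TT_def)
  have cardTT: "card TT = (n - 1) choose d"
  proof -
    have eq: "TT = insert n ` {B. B \<subseteq> {1..n-1} \<and> card B = d}"
    proof
      show "TT \<subseteq> insert n ` {B. B \<subseteq> {1..n-1} \<and> card B = d}"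
      proof
        fix T assume T: "T \<in> TT"
        note t = TTD[OF T]
        have "T - {n} \<subseteq> {1..n-1}" using t by auto
        moreover have "card (T - {n}) = d" using t by simp
        moreover have "T = insert n (T - {n})" using t by auto
        ultimately show "T \<in> insert n ` {B. B \<subseteq> {1..n-1} \<and> card B = d}" by blast
      qed
    next
      show "insert n ` {B. B \<subseteq> {1..n-1} \<and> card B = d} \<subseteq> TT"
      proof
        fix T assume "T \<in> insert n ` {B. B \<subseteq> {1..n-1} \<and> card B = d}"
        then obtain B where B: "B \<subseteq> {1..n-1}" "card B = d" "T = insert n B" by auto
        have "finite B" using B(1) finite_subset by blast
        moreover have "n \<notin> B" using B(1) d by auto
        moreover have "B \<subseteq> {1..n}"
        proof
          fix x assume "x \<in> B"
          then have "x \<in> {1..n-1}" using B(1) by blast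
          then show "x \<in> {1..n}" by auto
        qed
        ultimately show "T \<in> TT" using B d by (auto simp: TT_def)
      qed
    qed
    have inj: "inj_on (insert n) {B. B \<subseteq> {1..n-1} \<and> card B = d}"
    proof (rule inj_onI)
      fix A B assume "A \<in> {B. B \<subseteq> {1..n-1} \<and> card B = d}" "B \<in> {B. B \<subseteq> {1..n-1} \<and> card B = d}"
        "insert n A = insert n B"
      moreover have "n \<notin> A" "n \<notin> B" using calculation d by auto
      ultimately show "A = B" by (metis insert_ident)
    qed
    have "card TT = card {B. B \<subseteq> {1..n-1} \<and> card B = d}"
      unfolding eq by (rule card_image[OF inj])
    also have "\<dots> = card {1..n-1} choose d" by (rule n_subsets) simp
    finally show ?thesis by simp
  qed
  have P1: "\<forall>\<phi>\<in>F. (\<forall>v\<in>pp_vertices d n. \<phi> v \<in> {-1, 0, 1}) \<and> (\<forall>v. v \<notin> pp_vertices d n \<longrightarrow> \<phi> v = 0)"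
  proof
    fix \<phi> assume "\<phi> \<in> F"
    then obtain T where "\<phi> = phi d n T" by (auto simp: F_def)
    moreover have "phi d n T v \<in> {-1, 0, 1}" for v
    proof (cases "v \<in> pp_vertices d n \<and> set v \<subseteq> T")
      case True then show ?thesis using phi_pm[of v d n T] by auto
    next
      case False
      then have "phi d n T v = 0" unfolding phi_def by (rule if_not_P)
      then show ?thesis by simp
    qed
    moreover have "phi d n T v = 0" if "v \<notin> pp_vertices d n" for v
      unfolding phi_def using that by simp
    ultimately show "(\<forall>v\<in>pp_vertices d n. \<phi> v \<in> {-1, 0, 1}) \<and> (\<forall>v. v \<notin> pp_vertices d n \<longrightarrow> \<phi> v = 0)"
      by blast
  qed
  have P2: "\<forall>\<phi>\<in>F. (\<exists>v\<in>pp_vertices d n. \<phi> v = -1) \<and> (\<exists>v\<in>pp_vertices d n. \<phi> v = 1)"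
  proof
    fix \<phi> assume "\<phi> \<in> F"
    then obtain T where T: "T \<in> TT" and ph: "\<phi> = phi d n T" by (auto simp: F_def)
    note t = TTD[OF T]
    define v1 where "v1 = xT T"
    define v2 where "v2 = v1[0:=n]"
    have v1: "v1 \<in> pp_vertices d n" "set v1 \<subseteq> T" using xTV[OF T] by (auto simp: v1_def)
    have sv1: "set v1 = T - {n}" using t by (simp add: xT_def v1_def)
    have lv1: "length v1 = d" "distinct v1" using v1 by (auto simp: pp_vertices_def)
    have nv1: "n \<notin> set v1" using sv1 by simp
    have sv2: "set v2 \<subseteq> insert n (set v1)" unfolding v2_def by (rule set_update_subset_insert)
    have v2V: "v2 \<in> pp_vertices d n"
    proof -
      have "set v2 \<subseteq> {1..n}" using sv2 v1 d unfolding pp_vertices_def by auto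
      moreover have "distinct v2" using lv1 nv1 by (simp add: v2_def distinct_list_update)
      ultimately show ?thesis using lv1 by (simp add: pp_vertices_def v2_def)
    qed
    have v2T: "set v2 \<subseteq> T" using sv2 v1 t by auto
    have n0: "n \<noteq> v1!0" using nv1 lv1 d by (metis gr0I nth_mem not_one_le_zero)
    have "phi d n T v2 = - phi d n T v1"
      by (rule phi_swap[OF t(1,2) v1 v2V v2T _ v2_def n0]) (use d in simp)
    moreover have "phi d n T v1 = 1 \<or> phi d n T v1 = -1" by (rule phi_pm[OF v1])
    ultimately show "(\<exists>v\<in>pp_vertices d n. \<phi> v = -1) \<and> (\<exists>v\<in>pp_vertices d n. \<phi> v = 1)"
      using v1 v2V ph by (metis neg_equal_iff_equal equation_minus_iff)
  qed
  have P3: "\<forall>\<phi>\<in>F. \<forall>K. pp_maximal_clique d n K \<longrightarrow> (\<Sum>v\<in>K. \<phi> v) = 0"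
    using maxclique_sum[OF _ _ d] TTD by (auto simp: F_def)
  have P4: "lin_indep_on (pp_vertices d n) F"
    unfolding lin_indep_on_def
  proof (intro allI impI ballI)
    fix c \<phi> assume h: "\<forall>v\<in>pp_vertices d n. (\<Sum>\<psi>\<in>F. c \<psi> * \<psi> v) = 0" and "\<phi> \<in> F"
    then obtain T where T: "T \<in> TT" and ph: "\<phi> = phi d n T" by (auto simp: F_def)
    have finF: "finite F" using finTT by (simp add: F_def)
    have "(\<Sum>\<psi>\<in>F. c \<psi> * \<psi> (xT T)) = c \<phi> * \<phi> (xT T) + (\<Sum>\<psi>\<in>F - {\<phi>}. c \<psi> * \<psi> (xT T))"
      using finF \<open>\<phi> \<in> F\<close> by (rule sum.remove)
    also have "(\<Sum>\<psi>\<in>F - {\<phi>}. c \<psi> * \<psi> (xT T)) = 0"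
    proof (rule sum.neutral, rule ballI)
      fix \<psi> assume "\<psi> \<in> F - {\<phi>}"
      then obtain T' where T': "T' \<in> TT" "\<psi> = phi d n T'" "\<psi> \<noteq> \<phi>" by (auto simp: F_def)
      have "\<psi> (xT T) = 0"
      proof (rule ccontr)
        assume "\<psi> (xT T) \<noteq> 0"
        then have "T' = T" using diag[OF T T'(1)] T'(2) by simp
        then show False using T' ph by simp
      qed
      then show "c \<psi> * \<psi> (xT T) = 0" by simp
    qed
    finally have "c \<phi> * \<phi> (xT T) = 0" using h xTV[OF T] by simp
    then show "c \<phi> = 0" using nz[OF T] ph by simp
  qed
  have "finite F" using finTT by (simp add: F_def)
  moreover have "card F = (n - 1) choose d" using card_image[OF injF] cardTT by (simp add: F_def)
  ultimately show ?thesis using P1 P2 P3 P4 by blast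
qed

end
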